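(* Let $c<d$ be real numbers and $\Lambda$ a closed interval of $\mathbb{R}$. Let $f\colon[c,d]\times\Lambda\to(0,\infty)$ be jointly continuous with $\partial f/\partial\lambda$ jointly continuous, and assume $\frac{\partial f}{\partial\lambda}(x,\lambda)=f(x,\lambda)g(x,\lambda)$ where, for each $\lambda\in\Lambda$, $g(\cdot,\lambda)$ is strictly increasing (respectively strictly decreasing) in $x$. Then $$h(x,\lambda)=\frac{\int_x^d f(y,\lambda)\,dy}{\int_c^x f(y,\lambda)\,dy}$$ is a strictly increasing (respectively strictly decreasing) function of $\lambda\in\Lambda$ for every $x\in(c,d)$. *)

theory Defs
  imports "HOL-Analysis.Analysis"
begin

end

theory Submission
  imports Defs
begin


lemma pos_int:
  fixes u v :: real and phi :: "real \<Rightarrow> real"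
  assumes "u < v" "continuous_on {u..v} phi" "\<And>y. y \<in> {u..v} \<Longrightarrow> phi y \<ge> 0"
    "p \<in> {u..v}" "phi p > 0"
  shows "integral {u..v} phi > 0"
proof -
  have int: "phi integrable_on {u..v}" using assms(2) integrable_continuous_interval by blast
  have ge: "integral {u..v} phi \<ge> 0" using integral_nonneg[OF int] assms(3) by blast
  show ?thesis
  proof (rule ccontr)
    assume "\<not> ?thesis"
    then have "integral {u..v} phi = 0" using ge by linarith
    then have "(phi has_integral 0) (cbox u v)" using int has_integral_integral by (metis cbox_interval)
    then have "phi p = 0"
      using has_integral_0_cbox_imp_0[of u v phi p] assms by auto
    with assms(5) show False by simp
  qed
qed

lemma cont_slice:
  fixes f :: "real \<Rightarrow> real \<Rightarrow> real"
  assumes "continuous_on ({c..d} \<times> {a..b}) (\<lambda>(x, l). f x l)" "l \<in> {a..b}" "{u..v} \<subseteq> {c..d}"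
  shows "continuous_on {u..v} (\<lambda>y. f y l)"
proof -
  have "continuous_on {u..v} ((\<lambda>(x, l). f x l) \<circ> (\<lambda>y. (y, l)))"
    by (rule continuous_on_compose) (use assms in \<open>auto intro!: continuous_intros continuous_on_subset[OF assms(1)]\<close>)
  then show ?thesis by (simp add: o_def)
qed

lemma cont_slice2:
  fixes f :: "real \<Rightarrow> real \<Rightarrow> real"
  assumes "continuous_on ({c..d} \<times> {a..b}) (\<lambda>(x, l). f x l)" "{u..v} \<subseteq> {c..d}"
  shows "continuous_on ({a..b} \<times> {u..v}) (\<lambda>(l, y). f y l)"
proof -
  have "continuous_on ({a..b} \<times> {u..v}) ((\<lambda>(x, l). f x l) \<circ> (\<lambda>(l,y). (y, l)))"
    apply (rule continuous_on_compose)
     apply (auto intro!: continuous_intros simp: split_beta)[1]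
    apply (rule continuous_on_subset[OF assms(1)])
    using assms(2) by auto
  then show ?thesis by (simp add: o_def split_beta)
qed

lemma core:
  fixes c d a b s x l1 l2 :: real
    and f fl g :: "real \<Rightarrow> real \<Rightarrow> real"
  assumes fpos: "\<And>x l. x \<in> {c..d} \<Longrightarrow> l \<in> {a..b} \<Longrightarrow> f x l > 0"
    and fcont: "continuous_on ({c..d} \<times> {a..b}) (\<lambda>(x, l). f x l)"
    and fderiv: "\<And>x l. x \<in> {c..d} \<Longrightarrow> l \<in> {a..b} \<Longrightarrow>
                   ((\<lambda>m. f x m) has_real_derivative fl x l) (at l within {a..b})"
    and flcont: "continuous_on ({c..d} \<times> {a..b}) (\<lambda>(x, l). fl x l)"
    and fg: "\<And>x l. x \<in> {c..d} \<Longrightarrow> l \<in> {a..b} \<Longrightarrow> fl x l = f x l * g x l"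
    and gs: "\<And>l y z. l \<in> {a..b} \<Longrightarrow> y \<in> {c..d} \<Longrightarrow> z \<in> {c..d} \<Longrightarrow> z < y \<Longrightarrow> s * g z l < s * g y l"
    and x: "x \<in> {c<..<d}" and l1: "l1 \<in> {a..b}" and l2: "l2 \<in> {a..b}" and l12: "l1 < l2"
  shows "s * (integral {x..d} (\<lambda>y. f y l1) / integral {c..x} (\<lambda>y. f y l1))
       < s * (integral {x..d} (\<lambda>y. f y l2) / integral {c..x} (\<lambda>y. f y l2))"
proof -
  define F where "F l = integral {c..x} (\<lambda>y. f y l)" for l
  define G where "G l = integral {x..d} (\<lambda>y. f y l)" for l
  define F' where "F' l = integral {c..x} (\<lambda>y. fl y l)" for l
  define G' where "G' l = integral {x..d} (\<lambda>y. fl y l)" for l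
  have cx: "c < x" and xd: "x < d" using x by auto
  have sub1: "{c..x} \<subseteq> {c..d}" and sub2: "{x..d} \<subseteq> {c..d}" using x by auto
  have Fd: "(F has_field_derivative F' l) (at l within {a..b})" if l: "l \<in> {a..b}" for l
  proof -
    have i: "(\<lambda>y. f y m) integrable_on cbox c x" if "m \<in> {a..b}" for m
      using cont_slice[OF fcont that sub1] integrable_continuous_interval by (simp add: cbox_interval)
    have dd: "((\<lambda>m. f y m) has_field_derivative fl y m) (at m within {a..b})" if "m \<in> {a..b}" "y \<in> cbox c x" for m y
      using fderiv[of y m] that sub1 by (auto simp: cbox_interval)
    have cc: "continuous_on ({a..b} \<times> cbox c x) (\<lambda>(l, y). fl y l)"
      using cont_slice2[OF flcont sub1] by (simp add: cbox_interval)
    show ?thesis unfolding F'_def F_def[abs_def] G'_def G_def[abs_def]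
      using leibniz_rule_field_derivative[of "{a..b}" c x "\<lambda>l y. f y l"
        "\<lambda>l y. fl y l" l, OF dd i cc l convex_real_interval(5)]
      by (simp add: cbox_interval)
  qed
  have Gd: "(G has_field_derivative G' l) (at l within {a..b})" if l: "l \<in> {a..b}" for l
  proof -
    have i: "(\<lambda>y. f y m) integrable_on cbox x d" if "m \<in> {a..b}" for m
      using cont_slice[OF fcont that sub2] integrable_continuous_interval by (simp add: cbox_interval)
    have dd: "((\<lambda>m. f y m) has_field_derivative fl y m) (at m within {a..b})" if "m \<in> {a..b}" "y \<in> cbox x d" for m y
      using fderiv[of y m] that sub2 by (auto simp: cbox_interval)
    have cc: "continuous_on ({a..b} \<times> cbox x d) (\<lambda>(l, y). fl y l)"
      using cont_slice2[OF flcont sub2] by (simp add: cbox_interval)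
    show ?thesis unfolding F'_def F_def[abs_def] G'_def G_def[abs_def]
      using leibniz_rule_field_derivative[of "{a..b}" x d "\<lambda>l y. f y l"
        "\<lambda>l y. fl y l" l, OF dd i cc l convex_real_interval(5)]
      by (simp add: cbox_interval)
  qed
  have Fpos: "F l > 0" if l: "l \<in> {a..b}" for l
    unfolding F_def
  proof (rule pos_int[OF cx cont_slice[OF fcont l sub1], of x])
    fix y assume "y \<in> {c..x}"
    then have "f y l > 0" using fpos l sub1 by blast
    then show "f y l \<ge> 0" by simp
  next
    show "f x l > 0" using fpos l cx xd by simp
  qed (use cx in simp)
  have Gpos: "G l > 0" if l: "l \<in> {a..b}" for l
    unfolding G_def
  proof (rule pos_int[OF xd cont_slice[OF fcont l sub2], of d])
    fix y assume "y \<in> {x..d}"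
    then have "f y l > 0" using fpos l sub2 by blast
    then show "f y l \<ge> 0" by simp
  next
    show "f d l > 0" using fpos l cx xd by simp
  qed (use xd in simp)
  have key: "s * (G' l * F l - G l * F' l) > 0" if l: "l \<in> {a..b}" for l
  proof -
    have i1: "(\<lambda>y. f y l) integrable_on {u..v}" if "{u..v} \<subseteq> {c..d}" for u v
      using cont_slice[OF fcont l that] integrable_continuous_interval by blast
    have i2: "(\<lambda>y. fl y l) integrable_on {u..v}" if "{u..v} \<subseteq> {c..d}" for u v
      using cont_slice[OF flcont l that] integrable_continuous_interval by blast
    have c1: "continuous_on {u..v} (\<lambda>y. s * fl y l - s * g x l * f y l)" if "{u..v} \<subseteq> {c..d}" for u v
      by (intro continuous_intros cont_slice[OF flcont l that] cont_slice[OF fcont l that])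
    have A: "integral {x..d} (\<lambda>y. s * fl y l - s * g x l * f y l) > 0"
    proof (rule pos_int[OF xd c1[OF sub2], of d])
      fix y assume y: "y \<in> {x..d}"
      then have "s * g x l \<le> s * g y l" using gs[OF l, of y x] x sub2 by (cases "x = y") auto
      moreover have "f y l > 0" using fpos y sub2 l by blast
      moreover have "s * fl y l - s * g x l * f y l = f y l * (s * g y l - s * g x l)"
        using fg[of y l] y sub2 l by (auto simp: algebra_simps)
      ultimately show "s * fl y l - s * g x l * f y l \<ge> 0"
        by simp
    next
      have "s * g x l < s * g d l" using gs[OF l, of d x] x by auto
      moreover have "f d l > 0" using fpos cx xd l by simp
      moreover have "s * fl d l - s * g x l * f d l = f d l * (s * g d l - s * g x l)"
        using fg[of d l] cx xd l by (auto simp: algebra_simps)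
      ultimately show "s * fl d l - s * g x l * f d l > 0"
        by simp
    qed (use xd in auto)
    have B: "integral {c..x} (\<lambda>y. s * g x l * f y l - s * fl y l) > 0"
    proof (rule pos_int[OF cx _, where p=c])
      show "continuous_on {c..x} (\<lambda>y. s * g x l * f y l - s * fl y l)"
        by (intro continuous_intros cont_slice[OF flcont l sub1] cont_slice[OF fcont l sub1])
      fix y assume y: "y \<in> {c..x}"
      then have "s * g y l \<le> s * g x l" using gs[OF l, of x y] x sub1 by (cases "x = y") auto
      moreover have "f y l > 0" using fpos y sub1 l by blast
      moreover have "s * g x l * f y l - s * fl y l = f y l * (s * g x l - s * g y l)"
        using fg[of y l] y sub1 l by (auto simp: algebra_simps)
      ultimately show "s * g x l * f y l - s * fl y l \<ge> 0"
        by simp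
    next
      have "s * g c l < s * g x l" using gs[OF l, of x c] x by auto
      moreover have "f c l > 0" using fpos cx xd l by simp
      moreover have "s * g x l * f c l - s * fl c l = f c l * (s * g x l - s * g c l)"
        using fg[of c l] cx xd l by (auto simp: algebra_simps)
      ultimately show "s * g x l * f c l - s * fl c l > 0"
        by simp
    qed (use cx in auto)
    have A': "s * G' l - s * g x l * G l > 0"
    proof -
      have "((\<lambda>y. s * fl y l - s * g x l * f y l) has_integral (s * G' l - s * g x l * G l)) {x..d}"
        unfolding G'_def G_def
        by (intro has_integral_diff has_integral_mult_right integrable_integral i1[OF sub2] i2[OF sub2])
      then show ?thesis using A integral_unique by metis
    qed
    have B': "s * g x l * F l - s * F' l > 0"
    proof -
      have "((\<lambda>y. s * g x l * f y l - s * fl y l) has_integral (s * g x l * F l - s * F' l)) {c..x}"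
        unfolding F'_def F_def
        by (intro has_integral_diff has_integral_mult_right integrable_integral i1[OF sub1] i2[OF sub1])
      then show ?thesis using B integral_unique by metis
    qed
    have "s * (G' l * F l - G l * F' l) = (s * G' l - s * g x l * G l) * F l + G l * (s * g x l * F l - s * F' l)"
      by (simp add: algebra_simps)
    also have "\<dots> > 0" using A' B' Fpos[OF l] Gpos[OF l] by (intro add_pos_pos mult_pos_pos)
    finally show ?thesis .
  qed
  define h where "h l = s * (G l / F l)" for l
  have hd: "(h has_field_derivative s * ((G' l * F l - G l * F' l) / (F l * F l))) (at l within {a..b})"
    if l: "l \<in> {a..b}" for l
    unfolding h_def
    by (intro DERIV_cmult DERIV_divide Gd Fd l) (use Fpos[OF l] in auto)
  have hc: "continuous_on {a..b} h" using hd by (rule DERIV_continuous_on)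
  have "h l1 < h l2"
  proof (rule DERIV_pos_imp_increasing_open[OF l12])
    show "continuous_on {l1..l2} h" using hc by (rule continuous_on_subset) (use l1 l2 in auto)
    fix t assume t: "l1 < t" "t < l2"
    then have tin: "t \<in> {a<..<b}" using l1 l2 by auto
    then have "at t within {a..b} = at t"
      by (intro at_within_interior) auto
    then have "DERIV h t :> s * ((G' t * F t - G t * F' t) / (F t * F t))"
      using hd[of t] tin by auto
    moreover have "s * ((G' t * F t - G t * F' t) / (F t * F t)) > 0"
      using key[of t] Fpos[of t] tin by (simp add: divide_pos_pos)
    ultimately show "\<exists>y. DERIV h t :> y \<and> y > 0" by blast
  qed
  then show ?thesis unfolding h_def F_def G_def .
qed



theorem lemmaC1:
  fixes c d a b :: real
    and f fl g :: "real \<Rightarrow> real \<Rightarrow> real"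
  assumes cd: "c < d"
    and ab: "a \<le> b"
    and fpos: "\<And>x l. x \<in> {c..d} \<Longrightarrow> l \<in> {a..b} \<Longrightarrow> f x l > 0"
    and fcont: "continuous_on ({c..d} \<times> {a..b}) (\<lambda>(x, l). f x l)"
    and fderiv: "\<And>x l. x \<in> {c..d} \<Longrightarrow> l \<in> {a..b} \<Longrightarrow>
                   ((\<lambda>m. f x m) has_real_derivative fl x l) (at l within {a..b})"
    and flcont: "continuous_on ({c..d} \<times> {a..b}) (\<lambda>(x, l). fl x l)"
    and fg: "\<And>x l. x \<in> {c..d} \<Longrightarrow> l \<in> {a..b} \<Longrightarrow> fl x l = f x l * g x l"
  shows "((\<forall>l\<in>{a..b}. strict_mono_on {c..d} (\<lambda>x. g x l)) \<longrightarrow>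
            (\<forall>x\<in>{c<..<d}. strict_mono_on {a..b}
               (\<lambda>l. integral {x..d} (\<lambda>y. f y l) / integral {c..x} (\<lambda>y. f y l))))
       \<and> ((\<forall>l\<in>{a..b}. strict_antimono_on {c..d} (\<lambda>x. g x l)) \<longrightarrow>
            (\<forall>x\<in>{c<..<d}. strict_antimono_on {a..b}
               (\<lambda>l. integral {x..d} (\<lambda>y. f y l) / integral {c..x} (\<lambda>y. f y l))))"
  proof (intro conjI impI ballI)
  fix x assume mono: "\<forall>l\<in>{a..b}. strict_mono_on {c..d} (\<lambda>x. g x l)" and x: "x \<in> {c<..<d}"
  show "strict_mono_on {a..b} (\<lambda>l. integral {x..d} (\<lambda>y. f y l) / integral {c..x} (\<lambda>y. f y l))"
  proof (rule monotone_onI)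
    fix l1 l2 assume l: "l1 \<in> {a..b}" "l2 \<in> {a..b}" "l1 < l2"
    have gs: "1 * g z l < 1 * g y l" if "l \<in> {a..b}" "y \<in> {c..d}" "z \<in> {c..d}" "z < y" for l y z
      using mono that by (auto simp: monotone_on_def)
    show "integral {x..d} (\<lambda>y. f y l1) / integral {c..x} (\<lambda>y. f y l1)
        < integral {x..d} (\<lambda>y. f y l2) / integral {c..x} (\<lambda>y. f y l2)"
      using core[OF fpos fcont fderiv flcont fg gs x l] by simp
  qed
next
  fix x assume mono: "\<forall>l\<in>{a..b}. strict_antimono_on {c..d} (\<lambda>x. g x l)" and x: "x \<in> {c<..<d}"
  show "strict_antimono_on {a..b} (\<lambda>l. integral {x..d} (\<lambda>y. f y l) / integral {c..x} (\<lambda>y. f y l))"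
  proof (rule monotone_onI)
    fix l1 l2 assume l: "l1 \<in> {a..b}" "l2 \<in> {a..b}" "l1 < l2"
    have gs: "(-1) * g z l < (-1) * g y l" if "l \<in> {a..b}" "y \<in> {c..d}" "z \<in> {c..d}" "z < y" for l y z
      using mono that by (auto simp: monotone_on_def)
    show "integral {x..d} (\<lambda>y. f y l2) / integral {c..x} (\<lambda>y. f y l2)
        < integral {x..d} (\<lambda>y. f y l1) / integral {c..x} (\<lambda>y. f y l1)"
      using core[OF fpos fcont fderiv flcont fg gs x l] by simp
  qed
qed

end
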